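(* Let $w$ be an infinite word on $\mathcal{A}$ with infinitely many palindromic prefixes; let $(n_i)_{i\ge1}$ be the increasing sequence of their lengths ($n_1=0$) and $\pi_i$ the palindromic prefix of $w$ of length $n_i$. Let $i_0$ be an integer. The following are equivalent: (i) $n_{i+1}\le 2n_i+1$ for all $i\ge i_0$; (ii) there exists a reduced function $\psi$ such that for every $i\ge i_0$, either $\psi(i)\in\mathcal{A}$ and $\pi_{i+1}=\pi_i\,\psi(i)\,\pi_i$, or $\psi(i)\in\mathbb{N}^*$ and $\pi_{i+1}=\pi_i b$, where $b$ is the word with $\pi_i=\pi_{\psi(i)}b$ (i.e. $\pi_{i+1}=\pi_i\pi_{\psi(i)}^{-1}\pi_i$).
   Context: $\mathcal{A}$ is an alphabet (finite or infinite) disjoint from $\mathbb{N}^*=\{1,2,\dots\}$; the empty word is a palindrome. A function here is a map $\psi:\mathbb{N}^*\to\mathbb{N}^*\sqcup\mathcal{A}$ such that for every $n\ge1$ either $\psi(n)\in\mathcal{A}$ or $1\le\psi(n)\le n-1$. Let $(t_k)_{k\ge0}$ be the (finite or infinite) family, in increasing order, of all $n\ge1$ with $\psi(n)\in\mathcal{A}$ or $1\le\psi(n)\le n-2$. $\psi$ is reduced if for every $k\ge1$ such that $t_k$ exists: $\psi(t_k)\ne\psi(t_{k-1})$, and either $\psi(t_k)\in\mathcal{A}$ or $\psi(t_k)<t_{k-1}$. *)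

theory Defs
  imports Main "HOL-Library.Infinite_Set"
begin

text \<open>Infinite words over the alphabet 'a are maps nat => 'a (positions 0,1,2,...).
  The disjoint union N* + A is modelled by the sum type: Inl a is the letter a,
  Inr k is the positive integer k.\<close>

definition prefix_word :: "(nat \<Rightarrow> 'a) \<Rightarrow> nat \<Rightarrow> 'a list" where
  "prefix_word w n = map w [0..<n]"

definition is_palindrome :: "'a list \<Rightarrow> bool" where
  "is_palindrome u \<longleftrightarrow> rev u = u"

definition pal_lengths :: "(nat \<Rightarrow> 'a) \<Rightarrow> nat set" where
  "pal_lengths w = {n. is_palindrome (prefix_word w n)}"

definition pal_n :: "(nat \<Rightarrow> 'a) \<Rightarrow> nat \<Rightarrow> nat" where
  "pal_n w i = enumerate (pal_lengths w) (i - 1)"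

definition pal_pi :: "(nat \<Rightarrow> 'a) \<Rightarrow> nat \<Rightarrow> 'a list" where
  "pal_pi w i = prefix_word w (pal_n w i)"

definition is_psi_function :: "(nat \<Rightarrow> 'a + nat) \<Rightarrow> bool" where
  "is_psi_function \<psi> \<longleftrightarrow>
     (\<forall>n\<ge>1. case \<psi> n of Inl _ \<Rightarrow> True | Inr k \<Rightarrow> 1 \<le> k \<and> k \<le> n - 1)"

definition t_set :: "(nat \<Rightarrow> 'a + nat) \<Rightarrow> nat set" where
  "t_set \<psi> = {n. n \<ge> 1 \<and> (case \<psi> n of Inl _ \<Rightarrow> True | Inr k \<Rightarrow> 1 \<le> k \<and> k + 2 \<le> n)}"

definition reduced :: "(nat \<Rightarrow> 'a + nat) \<Rightarrow> bool" where
  "reduced \<psi> \<longleftrightarrow> is_psi_function \<psi> \<and>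
     (\<forall>m n. m \<in> t_set \<psi> \<longrightarrow> n \<in> t_set \<psi> \<longrightarrow> m < n \<longrightarrow>
        (\<forall>j. m < j \<and> j < n \<longrightarrow> j \<notin> t_set \<psi>) \<longrightarrow>
        \<psi> n \<noteq> \<psi> m \<and> (case \<psi> n of Inl _ \<Rightarrow> True | Inr k \<Rightarrow> k < m))"

end

theory Submission
  imports Defs
begin

definition palw :: "(nat \<Rightarrow> 'a) \<Rightarrow> nat \<Rightarrow> bool" where
  "palw w L \<longleftrightarrow> (\<forall>x<L. w x = w (L - 1 - x))"

definition perw :: "(nat \<Rightarrow> 'a) \<Rightarrow> nat \<Rightarrow> nat \<Rightarrow> bool" where
  "perw w L q \<longleftrightarrow> (\<forall>x. x + q < L \<longrightarrow> w x = w (x + q))"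

lemma length_prefix_word[simp]: "length (prefix_word w n) = n"
  by (simp add: prefix_word_def)

lemma nth_prefix_word[simp]: "x < n \<Longrightarrow> prefix_word w n ! x = w x"
  by (simp add: prefix_word_def)

lemma pal_iff: "n \<in> pal_lengths w \<longleftrightarrow> palw w n"
proof -
  have 1: "rev (prefix_word w n) = prefix_word w n \<longleftrightarrow> (\<forall>x<n. w (n - 1 - x) = w x)"
    by (simp add: list_eq_iff_nth_eq rev_nth)
  have 2: "(\<forall>x<n. w (n - 1 - x) = w x) \<longleftrightarrow> (\<forall>x<n. w x = w (n - 1 - x))"
  proof (intro iffI allI impI)
    fix x assume h: "\<forall>x<n. w (n - 1 - x) = w x" "x < n"
    show "w x = w (n - 1 - x)" using h(1)[rule_format, OF h(2)] by (rule sym)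
  next
    fix x assume h: "\<forall>x<n. w x = w (n - 1 - x)" "x < n"
    show "w (n - 1 - x) = w x" using h(1)[rule_format, OF h(2)] by (rule sym)
  qed
  show ?thesis unfolding pal_lengths_def is_palindrome_def palw_def mem_Collect_eq 1 2 ..
qed

lemma border: "palw w L \<Longrightarrow> perw w L q \<Longrightarrow> q \<le> L \<Longrightarrow> palw w (L - q)"
  unfolding palw_def perw_def
proof (intro allI impI)
  fix x assume p: "\<forall>x<L. w x = w (L - 1 - x)" and per: "\<forall>x. x + q < L \<longrightarrow> w x = w (x + q)"
    and "q \<le> L" and x: "x < L - q"
  have i1: "L - q - 1 - x < L" using x by linarith
  have "w (L - q - 1 - x) = w (L - 1 - (L - q - 1 - x))" using p[rule_format, OF i1] .
  also have "L - 1 - (L - q - 1 - x) = x + q" using x by linarith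
  also have "w (x + q) = w x" using per[rule_format, of x] x by (simp add: less_diff_conv)
  finally show "w x = w (L - q - 1 - x)" by simp
qed

lemma pal_pair: "palw w L \<Longrightarrow> palw w M \<Longrightarrow> M \<le> L \<Longrightarrow> perw w L (L - M)"
  unfolding palw_def perw_def
proof (intro allI impI)
  fix x assume pL: "\<forall>x<L. w x = w (L - 1 - x)" and pM: "\<forall>x<M. w x = w (M - 1 - x)"
    and hML: "M \<le> L" and x: "x + (L - M) < L"
  have i1: "x + (L - M) < L" "x < M" using x hML by linarith+
  have "w (x + (L - M)) = w (L - 1 - (x + (L - M)))" using pL[rule_format, OF i1(1)] .
  also have "L - 1 - (x + (L - M)) = M - 1 - x" using x hML by linarith
  also have "w (M - 1 - x) = w x" using pM[rule_format, OF i1(2)] by simp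
  finally show "w x = w (x + (L - M))" by simp
qed

lemma per_mod: "perw w L q \<Longrightarrow> q > 0 \<Longrightarrow> x < L \<Longrightarrow> w x = w (x mod q)"
proof (induction x rule: less_induct)
  case (less x)
  show ?case
  proof (cases "x < q")
    case True then show ?thesis by simp
  next
    case False
    have i1: "x - q + q < L" using False less.prems(3) by linarith
    have a: "w (x - q) = w (x - q + q)" using less.prems(1) i1 unfolding perw_def by blast
    have "x - q < x" "x - q < L" using False less.prems by linarith+
    then have b: "w (x - q) = w ((x - q) mod q)" using less.IH less.prems(1,2) by blast
    have c: "(x - q) mod q = x mod q" using False by (simp add: le_mod_geq)
    have "x - q + q = x" using False by linarith
    then show ?thesis using a b c by simp
  qed
qed

lemma per_ext:
  assumes "perw w L q" "perw w M d" "d dvd q" "q \<le> M" "d > 0" "q > 0"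
  shows "perw w L d"
  unfolding perw_def
proof (intro allI impI)
  fix x assume x: "x + d < L"
  have m1: "x mod q < M" using assms(4,6) mod_less_divisor[of q x] by linarith
  have m2: "(x + d) mod q < M" using assms(4,6) mod_less_divisor[of q "x + d"] by linarith
  have "x < L" using x by linarith
  have "w x = w (x mod q)" using per_mod[OF assms(1) assms(6) \<open>x < L\<close>] .
  also have "\<dots> = w (x mod q mod d)" using per_mod[OF assms(2) assms(5) m1] .
  also have "x mod q mod d = x mod d" using assms(3) by (simp add: mod_mod_cancel)
  finally have 1: "w x = w (x mod d)" .
  have "w (x + d) = w ((x + d) mod q)" using per_mod[OF assms(1) assms(6) x] .
  also have "\<dots> = w ((x + d) mod q mod d)" using per_mod[OF assms(2) assms(5) m2] .
  also have "(x + d) mod q mod d = x mod d" using assms(3) by (simp add: mod_mod_cancel)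
  finally show "w x = w (x + d)" using 1 by simp
qed


locale pw =
  fixes w :: "nat \<Rightarrow> 'a"
  assumes inf: "infinite (pal_lengths w)"
begin

abbreviation "nn \<equiv> pal_n w"

lemma n_pal: "palw w (nn i)"
proof -
  have "enumerate (pal_lengths w) (i - 1) \<in> pal_lengths w" by (rule enumerate_in_set[OF inf])
  then show ?thesis by (simp add: pal_n_def pal_iff)
qed

lemma n_1: "nn 1 = 0"
proof -
  have "0 \<in> pal_lengths w" by (simp add: pal_iff palw_def)
  have "enumerate (pal_lengths w) 0 = (LEAST n. n \<in> pal_lengths w)" by (rule enumerate_0)
  also have "\<dots> = 0" by (rule Least_eq_0) fact
  finally show ?thesis by (simp add: pal_n_def)
qed

lemma n_less: "1 \<le> i \<Longrightarrow> i < j \<Longrightarrow> nn i < nn j"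
  using enumerate_mono[OF _ inf, of "i - 1" "j - 1"] by (simp add: pal_n_def)

lemma n_less_iff: "1 \<le> i \<Longrightarrow> 1 \<le> j \<Longrightarrow> nn i < nn j \<longleftrightarrow> i < j"
  using enumerate_mono_iff[OF inf, of "i - 1" "j - 1"] by (simp add: pal_n_def) presburger

lemma n_le_iff: "1 \<le> i \<Longrightarrow> 1 \<le> j \<Longrightarrow> nn i \<le> nn j \<longleftrightarrow> i \<le> j"
  using enumerate_mono_le_iff[OF inf, of "i - 1" "j - 1"] by (simp add: pal_n_def) presburger

lemma n_inj: "1 \<le> i \<Longrightarrow> 1 \<le> j \<Longrightarrow> nn i = nn j \<Longrightarrow> i = j"
  using n_le_iff[of i j] n_le_iff[of j i] by auto

lemma n_all: "palw w L \<Longrightarrow> \<exists>k\<ge>1. nn k = L"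
proof -
  assume "palw w L"
  then obtain m where "enumerate (pal_lengths w) m = L"
    using enumerate_Ex[OF inf] pal_iff by blast
  then show ?thesis by (intro exI[of _ "Suc m"]) (simp add: pal_n_def)
qed

lemma n_next: "palw w L \<Longrightarrow> L < nn (i + 1) \<Longrightarrow> 1 \<le> i \<Longrightarrow> L \<le> nn i"
proof -
  assume a: "palw w L" "L < nn (i + 1)" "1 \<le> i"
  then obtain k where k: "k \<ge> 1" "nn k = L" using n_all by blast
  then have "k < i + 1" using a n_less_iff[of k "i+1"] by auto
  then show ?thesis using k n_le_iff[of k i] by auto
qed

lemma n_per: "1 \<le> i \<Longrightarrow> perw w (nn (i + 1)) (nn (i + 1) - nn i)"
  using pal_pair[OF n_pal n_pal] n_less[of i "i+1"] by auto

lemma n_min: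
  assumes "1 \<le> i" "perw w (nn (i + 1)) q" "0 < q" "q \<le> nn (i + 1)"
  shows "nn (i + 1) - nn i \<le> q"
proof -
  have "palw w (nn (i + 1) - q)" using border[OF n_pal assms(2,4)] .
  then have "nn (i + 1) - q \<le> nn i" using n_next assms by auto
  then show ?thesis by linarith
qed

lemma per_mono: "perw w L q \<Longrightarrow> M \<le> L \<Longrightarrow> perw w M q"
  unfolding perw_def by auto

definition good :: "nat \<Rightarrow> bool" where
  "good j \<longleftrightarrow> 1 \<le> j \<and> nn (j + 1) \<le> 2 * nn j + 1"

definition can :: "nat \<Rightarrow> 'a + nat" where
  "can j = (if nn (j + 1) = 2 * nn j + 1 then Inl (w (nn j))
            else Inr (THE k. k \<ge> 1 \<and> nn k = 2 * nn j - nn (j + 1)))"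

lemma can_Inl: "can j = Inl a \<Longrightarrow> nn (j + 1) = 2 * nn j + 1 \<and> a = w (nn j)"
  unfolding can_def by (auto split: if_splits)

lemma can_Inr:
  assumes "good j" "can j = Inr k"
  shows "1 \<le> k \<and> k < j \<and> nn k + nn (j + 1) = 2 * nn j"
proof -
  have j1: "1 \<le> j" and le: "nn (j + 1) \<le> 2 * nn j" using assms unfolding good_def can_def
    by (auto split: if_splits)
  have lt: "nn j < nn (j + 1)" using n_less j1 by auto
  define p where "p = nn (j + 1) - nn j"
  have "perw w (nn j) p" using per_mono[OF n_per[OF j1]] lt unfolding p_def by auto
  then have "palw w (nn j - p)" using border[OF n_pal] le unfolding p_def by auto
  then obtain k' where k': "k' \<ge> 1" "nn k' = nn j - p" using n_all by blast
  have eq: "nn j - p = 2 * nn j - nn (j + 1)" unfolding p_def using le lt by auto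
  have "(THE k. k \<ge> 1 \<and> nn k = 2 * nn j - nn (j + 1)) = k'"
    using k' eq n_inj by (intro the_equality) auto
  moreover have "k = (THE k. k \<ge> 1 \<and> nn k = 2 * nn j - nn (j + 1))"
    using assms(2) unfolding can_def by (auto split: if_splits)
  ultimately have kk: "k = k'" by simp
  have "nn k' < nn j" using k' lt unfolding p_def using le by auto
  then have "k' < j" using n_less_iff[of k' j] k' j1 by simp
  then show ?thesis using kk k' eq le lt by auto
qed

lemma can_notT:
  assumes g: "good j" and nt: "j \<notin> t_set can"
  shows "can j = Inr (j - 1)"
proof (cases "can j")
  case (Inl a)
  have "j \<ge> 1" using g unfolding good_def by simp
  then have "j \<in> t_set can" using Inl unfolding t_set_def by simp
  then show ?thesis using nt by simp
next
  case (Inr k)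
  have k: "1 \<le> k" "k < j" using can_Inr[OF g Inr] by auto
  have "j \<ge> 1" using g unfolding good_def by simp
  then have "\<not> (k + 2 \<le> j)" using nt Inr k unfolding t_set_def by simp
  then have "k = j - 1" using k by simp
  then show ?thesis using Inr by simp
qed

end


context pw
begin

lemma chain:
  assumes m1: "1 \<le> m" and ch: "\<forall>j. m < j \<and> j < i \<longrightarrow> good j \<and> can j = Inr (j - 1)"
  shows "m + r \<le> i \<Longrightarrow> nn (m + r) = nn m + r * (nn (m + 1) - nn m)"
proof (induction r rule: less_induct)
  case (less r)
  define D where "D = nn (m + 1) - nn m"
  show ?case
  proof (cases r)
    case 0
    then show ?thesis by simp
  next
    case (Suc r')
    show ?thesis
    proof (cases r')
      case 0
      have "nn m < nn (m + 1)" using n_less m1 by auto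
      then show ?thesis using Suc 0 by simp
    next
      case (Suc s)
      have r: "r = s + 2" using Suc \<open>r = Suc r'\<close> by simp
      have j: "m < m + s + 1" "m + s + 1 < i" using r less.prems by auto
      have "good (m + s + 1)" "can (m + s + 1) = Inr (m + s)" using ch j by auto
      then have e: "nn (m + s) + nn (m + s + 1 + 1) = 2 * nn (m + s + 1)"
        using can_Inr by fastforce
      have h1: "nn (m + (s + 1)) = nn m + (s + 1) * D"
        using less.IH[of "s + 1"] r less.prems unfolding D_def by auto
      have h2: "nn (m + s) = nn m + s * D"
        using less.IH[of "s"] r less.prems unfolding D_def by auto
      have "nn (m + r) = nn (m + s + 1 + 1)" using r by (simp add: add.assoc)
      also have "\<dots> = 2 * nn (m + s + 1) - nn (m + s)" using e by linarith
      also have "\<dots> = nn m + (s + 2) * D" using h1 h2 by (simp add: algebra_simps)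
      finally show ?thesis using r unfolding D_def by simp
    qed
  qed
qed


lemma chain_D:
  assumes m1: "1 \<le> m" and ch: "\<forall>j. m < j \<and> j < i \<longrightarrow> good j \<and> can j = Inr (j - 1)"
    and j: "m \<le> j" "j < i"
  shows "nn (j + 1) = nn j + (nn (m + 1) - nn m)"
proof -
  have a: "nn (m + (j - m)) = nn m + (j - m) * (nn (m + 1) - nn m)"
    using chain[OF m1 ch, of "j - m"] j by simp
  have b: "nn (m + Suc (j - m)) = nn m + Suc (j - m) * (nn (m + 1) - nn m)"
    using chain[OF m1 ch, of "Suc (j - m)"] j by simp
  have "m + (j - m) = j" "m + Suc (j - m) = j + 1" using j by auto
  then show ?thesis using a b by simp
qed

lemma boundA:
  assumes m1: "1 \<le> m" and mi: "m < i" and ch: "\<forall>j. m < j \<and> j < i \<longrightarrow> good j \<and> can j = Inr (j - 1)"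
    and gi: "good i" and ci: "can i = Inr k" and ki: "k + 2 \<le> i"
  shows "k < m"
proof (rule ccontr)
  assume "\<not> k < m" hence km: "m \<le> k" by simp
  define D where "D = nn (m + 1) - nn m"
  have kk: "1 \<le> k" "k < i" "nn k + nn (i + 1) = 2 * nn i" using can_Inr[OF gi ci] by auto
  have nk: "nn k = nn m + (k - m) * D" using chain[OF m1 ch, of "k - m"] km kk unfolding D_def by simp
  have ni: "nn i = nn m + (i - m) * D" using chain[OF m1 ch, of "i - m"] mi unfolding D_def by simp
  have Dpos: "0 < D" using n_less[of m "m + 1"] m1 unfolding D_def by simp
  have "nn i - nn k = (i - m) * D - (k - m) * D" using nk ni by linarith
  also have "\<dots> = ((i - m) - (k - m)) * D" by (rule diff_mult_distrib[symmetric])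
  also have "(i - m) - (k - m) = i - k" using km kk by simp
  finally have p0: "nn i - nn k = (i - k) * D" .
  have p: "nn (i + 1) - nn i = (i - k) * D" using p0 kk(3) by linarith
  have i1: "1 \<le> i" using gi unfolding good_def by simp
  have per1: "perw w (nn (i + 1)) ((i - k) * D)" using n_per[OF i1] p by simp
  have "nn (i - 1 + 1) = nn (i - 1) + D" using chain_D[OF m1 ch, of "i - 1"] mi unfolding D_def by simp
  then have e: "nn i - nn (i - 1) = D" using mi by simp
  have per2: "perw w (nn i) D" using n_per[of "i - 1"] e mi m1 by simp
  have ik: "1 \<le> i - k" using ki by linarith
  have ge: "D \<le> (i - k) * D" using mult_le_mono1[OF ik, of D] by simp
  have le: "(i - k) * D \<le> nn i" using p0 by linarith
  have per3: "perw w (nn (i + 1)) D"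
    using per_ext[OF per1 per2 _ le Dpos] ge Dpos by (simp add: mult_pos_pos)
  have lt2: "nn i < nn (i + 1)" using n_less[of i "i + 1"] i1 by simp
  have Dle: "D \<le> nn (i + 1)" using ge le lt2 by linarith
  have "(i - k) * D \<le> D" using n_min[OF i1 per3 Dpos Dle] p by linarith
  moreover have "2 * D \<le> (i - k) * D" using ki by (intro mult_le_mono1) simp
  ultimately show False using Dpos by linarith
qed

lemma distB:
  assumes m1: "1 \<le> m" and mi: "m < i" and ch: "\<forall>j. m < j \<and> j < i \<longrightarrow> good j \<and> can j = Inr (j - 1)"
    and gm: "good m" and cm: "can m = Inr k" and gi: "good i" and ci: "can i = Inr k"
  shows False
proof -
  define D where "D = nn (m + 1) - nn m"
  have km: "nn k + nn (m + 1) = 2 * nn m" using can_Inr[OF gm cm] by auto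
  have Dpos: "0 < D" using n_less[of m "m + 1"] m1 unfolding D_def by simp
  have nk: "nn k + D = nn m" using km n_less[of m "m + 1"] m1 unfolding D_def by linarith
  have ni: "nn i = nn m + (i - m) * D" using chain[OF m1 ch, of "i - m"] mi unfolding D_def by simp
  have ki: "nn k + nn (i + 1) = 2 * nn i" using can_Inr[OF gi ci] by auto
  have p0: "nn i - nn k = Suc (i - m) * D" using ni nk by simp
  have p: "nn (i + 1) - nn i = Suc (i - m) * D" using p0 ki by linarith
  have i1: "1 \<le> i" using gi unfolding good_def by simp
  have per1: "perw w (nn (i + 1)) (Suc (i - m) * D)" using n_per[OF i1] p by simp
  have "nn (i - 1 + 1) = nn (i - 1) + D" using chain_D[OF m1 ch, of "i - 1"] mi unfolding D_def by simp
  then have e: "nn i - nn (i - 1) = D" using mi by simp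
  have per2: "perw w (nn i) D" using n_per[of "i - 1"] e mi m1 by simp
  have le: "Suc (i - m) * D \<le> nn i" using p0 by linarith
  have per3: "perw w (nn (i + 1)) D"
    using per_ext[OF per1 per2 _ le Dpos] Dpos by simp
  have "Suc (i - m) * D \<le> D" using n_min[OF i1 per3 Dpos] p le n_less[of i "i + 1"] i1 by simp
  moreover have "2 * D \<le> Suc (i - m) * D" using mi by (intro mult_le_mono1) simp
  ultimately show False using Dpos by simp
qed

lemma distC:
  assumes m1: "1 \<le> m" and mi: "m < i" and ch: "\<forall>j. m < j \<and> j < i \<longrightarrow> good j \<and> can j = Inr (j - 1)"
    and cm: "can m = Inl a" and ci: "can i = Inl a"
  shows False
proof -
  define D where "D = nn (m + 1) - nn m"
  have am: "nn (m + 1) = 2 * nn m + 1" "a = w (nn m)" using can_Inl[OF cm] by auto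
  have ai: "nn (i + 1) = 2 * nn i + 1" "a = w (nn i)" using can_Inl[OF ci] by auto
  have D: "D = nn m + 1" using am unfolding D_def by simp
  have Dpos: "0 < D" using D by simp
  have ni: "nn i = nn m + (i - m) * D" using chain[OF m1 ch, of "i - m"] mi unfolding D_def by simp
  have q: "nn i + 1 = Suc (i - m) * D" using ni D by simp
  have i1: "1 \<le> i" using m1 mi by simp
  have per1: "perw w (nn (i + 1)) (nn i + 1)" using n_per[OF i1] ai by simp
  have "nn (i - 1 + 1) = nn (i - 1) + D" using chain_D[OF m1 ch, of "i - 1"] mi unfolding D_def by simp
  then have e: "nn i - nn (i - 1) = D" using mi by simp
  have per2: "perw w (nn i) D" using n_per[of "i - 1"] e mi m1 by simp
  have per3: "perw w (nn i + 1) D"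
    unfolding perw_def
  proof (intro allI impI)
    fix x assume x: "x + D < nn i + 1"
    show "w x = w (x + D)"
    proof (cases "x + D < nn i")
      case True
      then show ?thesis using per2 unfolding perw_def by blast
    next
      case False
      then have xd: "x + D = nn i" using x by simp
      have im: "i - m = Suc (i - m - 1)" using mi by simp
      have xe: "x = nn m + (i - m - 1) * D" using xd ni im
        by (metis add_right_cancel add.assoc add.commute mult_Suc)
      have "x < nn i" using xd Dpos by simp
      then have "w x = w (x mod D)" using per_mod[OF per2 Dpos] by blast
      also have "x mod D = nn m mod D" unfolding xe by (rule mod_mult_self1)
      also have "\<dots> = nn m" using D by simp
      finally show ?thesis using xd am ai by simp
    qed
  qed
  have le: "nn i + 1 \<le> nn i + 1" by simp
  have per4: "perw w (nn (i + 1)) D"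
    using per_ext[OF per1 per3 _ le Dpos] q Dpos by simp
  have "nn m < nn i" using n_less[OF m1 mi] .
  moreover have "nn i + 1 \<le> D" using n_min[OF i1 per4 Dpos] ai D \<open>nn m < nn i\<close> by simp
  ultimately show False using D by simp
qed

lemma can_spec:
  assumes gi: "good i"
  shows "case can i of Inl a \<Rightarrow> pal_pi w (i + 1) = pal_pi w i @ [a] @ pal_pi w i
           | Inr k \<Rightarrow> (\<exists>b. pal_pi w i = pal_pi w k @ b \<and> pal_pi w (i + 1) = pal_pi w i @ b)"
proof (cases "can i")
  case (Inl a)
  have ai: "nn (i + 1) = 2 * nn i + 1" "a = w (nn i)" using can_Inl[OF Inl] by auto
  have i1: "1 \<le> i" using gi unfolding good_def by simp
  have per1: "perw w (nn (i + 1)) (nn i + 1)" using n_per[OF i1] ai by simp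
  have "prefix_word w (nn (i + 1)) = prefix_word w (nn i) @ [a] @ prefix_word w (nn i)"
  proof (rule nth_equalityI)
    show "length (prefix_word w (nn (i + 1))) = length (prefix_word w (nn i) @ [a] @ prefix_word w (nn i))"
      using ai by simp
  next
    fix x assume "x < length (prefix_word w (nn (i + 1)))"
    then have x: "x < 2 * nn i + 1" using ai by simp
    show "prefix_word w (nn (i + 1)) ! x = (prefix_word w (nn i) @ [a] @ prefix_word w (nn i)) ! x"
    proof (cases "x \<le> nn i")
      case True
      then show ?thesis using x ai by (cases "x = nn i") (auto simp: nth_append)
    next
      case False
      define y where "y = x - nn i - 1"
      have xy: "x = y + (nn i + 1)" using False unfolding y_def by simp
      have "w y = w (y + (nn i + 1))" using per1 x xy ai unfolding perw_def by simp
      then show ?thesis using x xy ai by (simp add: nth_append)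
    qed
  qed
  then show ?thesis using Inl by (simp add: pal_pi_def)
next
  case (Inr k)
  have kk: "1 \<le> k" "k < i" "nn k + nn (i + 1) = 2 * nn i" using can_Inr[OF gi Inr] by auto
  have i1: "1 \<le> i" using gi unfolding good_def by simp
  have lt: "nn k < nn i" using n_less[OF kk(1,2)] .
  have lt2: "nn i < nn (i + 1)" using n_less[OF i1, of "i + 1"] by simp
  have per1: "perw w (nn (i + 1)) (nn (i + 1) - nn i)" using n_per[OF i1] .
  define b where "b = map w [nn k..<nn i]"
  have s1: "[0..<nn i] = [0..<nn k] @ [nn k..<nn i]"
    using upt_add_eq_append[of 0 "nn k" "nn i - nn k"] lt by simp
  have s2: "[0..<nn (i + 1)] = [0..<nn i] @ [nn i..<nn (i + 1)]"
    using upt_add_eq_append[of 0 "nn i" "nn (i + 1) - nn i"] lt2 by simp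
  have e1: "prefix_word w (nn i) = prefix_word w (nn k) @ b"
    unfolding prefix_word_def b_def s1 by simp
  have e2: "map w [nn i..<nn (i + 1)] = b"
  proof (rule nth_equalityI)
    show "length (map w [nn i..<nn (i + 1)]) = length b" unfolding b_def using kk by simp
  next
    fix y assume "y < length (map w [nn i..<nn (i + 1)])"
    then have y: "y < nn (i + 1) - nn i" by simp
    have c: "nn k + y + (nn (i + 1) - nn i) < nn (i + 1)" using y kk lt2 by linarith
    have A: "w (nn k + y) = w (nn k + y + (nn (i + 1) - nn i))"
      using per1 c unfolding perw_def by blast
    have B: "nn k + y + (nn (i + 1) - nn i) = nn i + y" using kk lt2 by linarith
    have C: "w (nn k + y) = w (nn i + y)" using A unfolding B .
    show "map w [nn i..<nn (i + 1)] ! y = b ! y"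
      unfolding b_def using y kk lt2 lt C by simp
  qed
  have e3: "prefix_word w (nn (i + 1)) = prefix_word w (nn i) @ b"
    unfolding prefix_word_def s2 using e2 by simp
  show ?thesis using Inr e1 e3 by (auto simp: pal_pi_def)
qed

end


theorem proposition6p1:
  fixes w :: "nat \<Rightarrow> 'a" and i0 :: int
  assumes "infinite (pal_lengths w)"
  shows "(\<forall>i\<ge>1. int i \<ge> i0 \<longrightarrow> pal_n w (i + 1) \<le> 2 * pal_n w i + 1) \<longleftrightarrow>
    (\<exists>\<psi> :: nat \<Rightarrow> 'a + nat. reduced \<psi> \<and>
       (\<forall>i\<ge>1. int i \<ge> i0 \<longrightarrow>
          (case \<psi> i of
             Inl a \<Rightarrow> pal_pi w (i + 1) = pal_pi w i @ [a] @ pal_pi w i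
           | Inr k \<Rightarrow> (\<exists>b. pal_pi w i = pal_pi w k @ b \<and> pal_pi w (i + 1) = pal_pi w i @ b))))"
proof -
  interpret pw w using assms by unfold_locales
  have lenpi: "\<And>i. length (pal_pi w i) = pal_n w i" by (simp add: pal_pi_def)
  show ?thesis
  proof
    assume H: "\<forall>i\<ge>1. int i \<ge> i0 \<longrightarrow> pal_n w (i + 1) \<le> 2 * pal_n w i + 1"
    define Bg where "Bg = {j. 1 \<le> j \<and> 2 * pal_n w j + 1 < pal_n w (j + 1)}"
    have Bsub: "Bg \<subseteq> {..< nat i0}"
    proof
      fix j assume "j \<in> Bg"
      then have "1 \<le> j" "2 * pal_n w j + 1 < pal_n w (j + 1)" unfolding Bg_def by auto
      then have "\<not> int j \<ge> i0" using H by force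
      then show "j \<in> {..< nat i0}" by simp
    qed
    have finB: "finite Bg" using Bsub finite_subset by blast
    define G where "G = (if Bg = {} then 0 else Max Bg)"
    have goodG: "pw.good w j" if "G < j" "1 \<le> j" for j
    proof -
      have "j \<notin> Bg"
      proof
        assume jB: "j \<in> Bg"
        then have "Bg \<noteq> {}" by auto
        then have "j \<le> G" unfolding G_def using finB jB by simp
        then show False using that by simp
      qed
      then show ?thesis unfolding Bg_def good_def using that by auto
    qed
    have GB: "G \<in> Bg" if "G \<noteq> 0"
    proof -
      have "Bg \<noteq> {}" using that unfolding G_def by auto
      then show ?thesis unfolding G_def using finB by simp
    qed
    have Glt: "G < i" if "1 \<le> i" "int i \<ge> i0" for i
    proof (cases "G = 0")
      case True then show ?thesis using that by simp
    next
      case False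
      then have "G < nat i0" using GB Bsub by auto
      then have "int G < i0" by (simp add: zless_nat_eq_int_zless)
      then show ?thesis using that by linarith
    qed
    have G1: "1 \<le> G" if "G \<noteq> 0" using GB[OF that] unfolding Bg_def by simp
    have two: "\<exists>c. c \<noteq> a" if "G \<noteq> 0" for a :: 'a
    proof (rule ccontr)
      assume "\<not> (\<exists>c. c \<noteq> a)"
      then have allw: "\<And>x. w x = a" by blast
      have GBg: "1 \<le> G" "2 * pal_n w G + 1 < pal_n w (G + 1)" using GB[OF that] unfolding Bg_def by auto
      have "palw w (pal_n w G + 1)" unfolding palw_def using allw by simp
      then have "pal_n w G + 1 \<le> pal_n w G" using n_next GBg by simp
      then show False by simp
    qed
    define T' where "T' = {i. G < i \<and> i \<in> t_set (pw.can w)}"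
    define istar where "istar = (LEAST i. i \<in> T')"
    define c where "c = (SOME c. pw.can w istar \<noteq> Inl c)"
    define c2 where "c2 = (SOME c2. c2 \<noteq> c)"
    define f where "f = (\<lambda>j. if j \<le> G then Inl (if even (G - j) then c else c2) else pw.can w j)"
    have cprop: "pw.can w istar \<noteq> Inl c" if G0: "G \<noteq> 0"
    proof -
      have "\<exists>c. pw.can w istar \<noteq> Inl c"
      proof (cases "pw.can w istar")
        case (Inl a)
        obtain c' where "c' \<noteq> a" using two[OF G0] by blast
        then show ?thesis using Inl by auto
      next
        case (Inr k)
        then show ?thesis by auto
      qed
      then show ?thesis unfolding c_def by (rule someI_ex)
    qed
    have c2prop: "c2 \<noteq> c" if "G \<noteq> 0"
      unfolding c2_def using two[OF that, of c] by (rule someI_ex)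
    have fbig: "f j = pw.can w j" if "G < j" for j using that unfolding f_def by simp
    have Tf: "j \<in> t_set f \<longleftrightarrow> j \<in> t_set (pw.can w)" if "G < j" for j
      using fbig[OF that] unfolding t_set_def by simp
    have TfG: "j \<in> t_set f" if "1 \<le> j" "j \<le> G" for j
      using that unfolding t_set_def f_def by simp
    have chainf: "\<forall>j. m < j \<and> j < i \<longrightarrow> pw.good w j \<and> pw.can w j = Inr (j - 1)"
      if "G \<le> m" "\<forall>j. m < j \<and> j < i \<longrightarrow> j \<notin> t_set f" for m i
    proof (intro allI impI)
      fix j assume j: "m < j \<and> j < i"
      have gj: "G < j" using j that by simp
      have g: "pw.good w j" using goodG[OF gj] gj by simp
      have "j \<notin> t_set (pw.can w)" using that j Tf[OF gj] by simp
      then show "pw.good w j \<and> pw.can w j = Inr (j - 1)" using can_notT[OF g] g by simp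
    qed
    show "\<exists>\<psi> :: nat \<Rightarrow> 'a + nat. reduced \<psi> \<and>
       (\<forall>i\<ge>1. int i \<ge> i0 \<longrightarrow>
          (case \<psi> i of
             Inl a \<Rightarrow> pal_pi w (i + 1) = pal_pi w i @ [a] @ pal_pi w i
           | Inr k \<Rightarrow> (\<exists>b. pal_pi w i = pal_pi w k @ b \<and> pal_pi w (i + 1) = pal_pi w i @ b)))"
    proof (intro exI conjI)
      show "\<forall>i\<ge>1. int i \<ge> i0 \<longrightarrow>
          (case f i of
             Inl a \<Rightarrow> pal_pi w (i + 1) = pal_pi w i @ [a] @ pal_pi w i
           | Inr k \<Rightarrow> (\<exists>b. pal_pi w i = pal_pi w k @ b \<and> pal_pi w (i + 1) = pal_pi w i @ b))"
      proof (intro allI impI)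
        fix i :: nat assume i: "1 \<le> i" "int i \<ge> i0"
        have gi: "G < i" using Glt[OF i] .
        show "case f i of
             Inl a \<Rightarrow> pal_pi w (i + 1) = pal_pi w i @ [a] @ pal_pi w i
           | Inr k \<Rightarrow> (\<exists>b. pal_pi w i = pal_pi w k @ b \<and> pal_pi w (i + 1) = pal_pi w i @ b)"
          unfolding fbig[OF gi] using can_spec[OF goodG[OF gi i(1)]] .
      qed
    next
      have psi: "is_psi_function f"
        unfolding is_psi_function_def
      proof (intro allI impI)
        fix j :: nat assume j: "1 \<le> j"
        show "case f j of Inl _ \<Rightarrow> True | Inr k \<Rightarrow> 1 \<le> k \<and> k \<le> j - 1"
        proof (cases "j \<le> G")
          case True then show ?thesis unfolding f_def by simp
        next
          case False
          then have gj: "G < j" by simp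
          show ?thesis
          proof (cases "pw.can w j")
            case (Inl a) then show ?thesis using fbig[OF gj] by simp
          next
            case (Inr k)
            have kk: "1 \<le> k" "k \<le> j - 1" using can_Inr[OF goodG[OF gj j] Inr] by auto
            then show ?thesis using fbig[OF gj] Inr by simp
          qed
        qed
      qed
      show "reduced f"
        unfolding reduced_def
      proof (rule conjI[OF psi], intro allI impI)
        fix m i assume mT: "m \<in> t_set f" and iT: "i \<in> t_set f" and mi: "m < i"
          and gap: "\<forall>j. m < j \<and> j < i \<longrightarrow> j \<notin> t_set f"
        have m1: "1 \<le> m" using mT unfolding t_set_def by simp
        show "f i \<noteq> f m \<and> (case f i of Inl _ \<Rightarrow> True | Inr k \<Rightarrow> k < m)"
        proof (cases "i \<le> G")
          case True
          have "i = m + 1"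
          proof (rule ccontr)
            assume "i \<noteq> m + 1"
            then have "m < m + 1 \<and> m + 1 < i" using mi by simp
            moreover have "m + 1 \<in> t_set f" using TfG[of "m + 1"] True mi by simp
            ultimately show False using gap by blast
          qed
          have G0: "G \<noteq> 0" using True mi by simp
          have "G - m = Suc (G - i)" using \<open>i = m + 1\<close> True by simp
          then have "f i \<noteq> f m" unfolding f_def using True mi c2prop[OF G0] by auto
          moreover have "\<exists>a. f i = Inl a" unfolding f_def using True by simp
          ultimately show ?thesis by auto
        next
          case False
          then have Gi: "G < i" by simp
          show ?thesis
          proof (cases "m \<le> G")
            case True
            have mG: "m = G"
            proof (rule ccontr)
              assume "m \<noteq> G"
              then have "m < G \<and> G < i" using True Gi by simp
              moreover have "G \<in> t_set f" using TfG[of G] True m1 by simp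
              ultimately show False using gap by blast
            qed
            have G0: "G \<noteq> 0" using mG m1 by simp
            have ch: "\<forall>j. G < j \<and> j < i \<longrightarrow> pw.good w j \<and> pw.can w j = Inr (j - 1)"
              using chainf[of G i] gap mG by simp
            have iT': "i \<in> T'" unfolding T'_def using Gi iT Tf[OF Gi] by simp
            have "istar = i" unfolding istar_def
            proof (rule Least_equality)
              show "i \<in> T'" by fact
            next
              fix y assume yT: "y \<in> T'"
              show "i \<le> y"
              proof (rule ccontr)
                assume "\<not> i \<le> y"
                then have "m < y \<and> y < i" using yT mG unfolding T'_def by simp
                moreover have "y \<in> t_set f" using yT Tf[of y] unfolding T'_def by simp
                ultimately show False using gap by blast
              qed
            qed
            then have "f i \<noteq> f m" using cprop[OF G0] fbig[OF Gi] mG unfolding f_def by simp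
            moreover have "(case f i of Inl _ \<Rightarrow> True | Inr k \<Rightarrow> k < m)"
            proof (cases "f i")
              case (Inl a) then show ?thesis by simp
            next
              case (Inr k)
              have ci: "pw.can w i = Inr k" using Inr fbig[OF Gi] by simp
              have i1: "1 \<le> i" using iT unfolding t_set_def by simp
              have "k + 2 \<le> i" using iT Inr unfolding t_set_def by simp
              then have "k < G" using boundA[OF G1[OF G0] Gi ch goodG[OF Gi i1] ci] by simp
              then show ?thesis using Inr mG by simp
            qed
            ultimately show ?thesis by simp
          next
            case False
            then have Gm: "G < m" by simp
            have ch: "\<forall>j. m < j \<and> j < i \<longrightarrow> pw.good w j \<and> pw.can w j = Inr (j - 1)"
              using chainf[of m i] gap Gm by simp
            have i1: "1 \<le> i" using iT unfolding t_set_def by simp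
            have gm: "pw.good w m" using goodG[OF Gm m1] .
            have gi: "pw.good w i" using goodG[OF Gi i1] .
            have fm: "f m = pw.can w m" and fi: "f i = pw.can w i" using fbig Gm Gi by auto
            have "pw.can w i \<noteq> pw.can w m"
            proof
              assume eq: "pw.can w i = pw.can w m"
              show False
              proof (cases "pw.can w m")
                case (Inl a)
                then show False using distC[OF m1 mi ch Inl] eq by simp
              next
                case (Inr k)
                then show False using distB[OF m1 mi ch gm Inr gi] eq by simp
              qed
            qed
            moreover have "(case f i of Inl _ \<Rightarrow> True | Inr k \<Rightarrow> k < m)"
            proof (cases "f i")
              case (Inl a) then show ?thesis by simp
            next
              case (Inr k)
              have ci: "pw.can w i = Inr k" using Inr fi by simp
              have "k + 2 \<le> i" using iT Inr unfolding t_set_def by simp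
              then have "k < m" using boundA[OF m1 mi ch gi ci] by simp
              then show ?thesis using Inr by simp
            qed
            ultimately show ?thesis using fm fi by simp
          qed
        qed
      qed
    qed
  next
    assume "\<exists>\<psi> :: nat \<Rightarrow> 'a + nat. reduced \<psi> \<and>
       (\<forall>i\<ge>1. int i \<ge> i0 \<longrightarrow>
          (case \<psi> i of
             Inl a \<Rightarrow> pal_pi w (i + 1) = pal_pi w i @ [a] @ pal_pi w i
           | Inr k \<Rightarrow> (\<exists>b. pal_pi w i = pal_pi w k @ b \<and> pal_pi w (i + 1) = pal_pi w i @ b)))"
    then obtain f :: "nat \<Rightarrow> 'a + nat" where
      hf: "\<forall>i\<ge>1. int i \<ge> i0 \<longrightarrow>
          (case f i of
             Inl a \<Rightarrow> pal_pi w (i + 1) = pal_pi w i @ [a] @ pal_pi w i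
           | Inr k \<Rightarrow> (\<exists>b. pal_pi w i = pal_pi w k @ b \<and> pal_pi w (i + 1) = pal_pi w i @ b))"
      by blast
    show "\<forall>i\<ge>1. int i \<ge> i0 \<longrightarrow> pal_n w (i + 1) \<le> 2 * pal_n w i + 1"
    proof (intro allI impI)
      fix i :: nat assume i: "1 \<le> i" "int i \<ge> i0"
      show "pal_n w (i + 1) \<le> 2 * pal_n w i + 1"
      proof (cases "f i")
        case (Inl a)
        then have "pal_pi w (i + 1) = pal_pi w i @ [a] @ pal_pi w i" using hf i by force
        then have "length (pal_pi w (i + 1)) = length (pal_pi w i @ [a] @ pal_pi w i)" by simp
        then show ?thesis using lenpi[of i] lenpi[of "i + 1"] by simp
      next
        case (Inr k)
        then obtain b where b: "pal_pi w i = pal_pi w k @ b" "pal_pi w (i + 1) = pal_pi w i @ b"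
          using hf i by force
        have "length (pal_pi w i) = length (pal_pi w k) + length b"
             "length (pal_pi w (i + 1)) = length (pal_pi w i) + length b"
          using b by simp_all
        then show ?thesis using lenpi[of i] lenpi[of "i + 1"] lenpi[of k] by linarith
      qed
    qed
  qed
qed

end
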